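(* Let $k\ge1$ be an integer and let $a\in\mathbb{C}$ with $a\notin\{-1,-2,-3,\dots\}$. Then $${}_2F_1\!\left(\left.\begin{array}{c}a,\ a+k\\ a+1\end{array}\right|\frac12\right)=2^{a}\left[2^{k-1}-\frac{k-1}{a+1}\,{}_2F_1\!\left(\left.\begin{array}{c}2-k,\ a+1\\ a+2\end{array}\right|-1\right)\right],$$ equivalently $${}_2F_1\!\left(a,a+k;a+1;\tfrac12\right)=2^{a}\left(2^{k-1}-\sum_{i=1}^{k-1}\frac{(k-1)!}{(i-1)!\,(k-i-1)!\,(a+i)}\right).$$ (For $k\ge2$ the ${}_2F_1$ on the right is a finite sum with $k-1$ terms; for $k=1$ the bracket equals $1$.)
   Context: ${}_2F_1(a,b;c;z)=\sum_{m\ge0}\frac{(a)_m(b)_m}{m!\,(c)_m}z^m$ with $(\alpha)_m=\Gamma(\alpha+m)/\Gamma(\alpha)$; when an upper parameter is a nonpositive integer $-N$ the series terminates after the term $m=N$. *)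

theory Defs
  imports "HOL-Analysis.Analysis"
begin

text \<open>When an upper parameter is a
  nonpositive integer the terms vanish beyond the terminating index, so the
  infinite sum is the finite sum.\<close>
definition hyp2F1 :: "complex \<Rightarrow> complex \<Rightarrow> complex \<Rightarrow> complex \<Rightarrow> complex" where
  "hyp2F1 a b c z =
     (\<Sum>m. pochhammer a m * pochhammer b m / (fact m * pochhammer c m) * z ^ m)"

end

theory Submission
  imports Defs
begin
definition r :: "complex \<Rightarrow> nat \<Rightarrow> complex" where
  "r a m = pochhammer a m / pochhammer (a+1) m"
definition T :: "nat \<Rightarrow> complex \<Rightarrow> nat \<Rightarrow> complex" where
  "T j a m = r a m * pochhammer (a + of_nat (j+1)) m / fact m * (1/2)^m"
definition S :: "nat \<Rightarrow> complex \<Rightarrow> complex" where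
  "S j a = (\<Sum>m\<le>j. of_nat (j choose m) * r a m)"
definition good :: "complex \<Rightarrow> bool" where
  "good a = (\<forall>n::nat. n \<ge> 1 \<longrightarrow> a \<noteq> - of_nat n)"

lemma half_powr: "(1/2::complex) powr (-a) = 2 powr a"
proof -
  have "Ln (1/2::complex) = - Ln 2"
    using Ln_of_real[of "1/2"] Ln_of_real[of 2] by (simp add: ln_div)
  then show ?thesis by (simp add: powr_def)
qed

lemma poch_step: "pochhammer (b+1) (Suc n) = pochhammer b (Suc n) + of_nat (Suc n) * pochhammer (b+1) n"
  unfolding pochhammer_rec'[of "b+1"] pochhammer_rec[of b] by (simp add: algebra_simps)

lemma good_shift: "good a \<Longrightarrow> good (a+1)"
  unfolding good_def
proof (intro allI impI)
  fix n :: nat assume g: "\<forall>n::nat. n \<ge> 1 \<longrightarrow> (a::complex) \<noteq> - of_nat n" and "n \<ge> 1"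
  have "a \<noteq> - of_nat (Suc n)" by (intro g[rule_format]) simp
  then show "a + 1 \<noteq> - of_nat n"
    by (metis add_diff_cancel_right' diff_minus_eq_add minus_add_distrib of_nat_Suc add.commute)
qed

lemma good_ne: "good a \<Longrightarrow> a + 1 + of_nat m \<noteq> 0"
proof
  assume g: "good a" and "a + 1 + of_nat m = 0"
  then have "a = - of_nat (Suc m)" by (simp add: algebra_simps eq_neg_iff_add_eq_0)
  with g show False unfolding good_def by auto
qed

lemma poch_ne0: "good a \<Longrightarrow> pochhammer (a+1) m \<noteq> 0"
proof
  assume g: "good a" and "pochhammer (a+1) m = 0"
  then obtain k where "a+1 = - of_nat k" by (auto simp: pochhammer_eq_0_iff)
  then have "a + 1 + of_nat k = 0" by simp
  with good_ne[OF g] show False by blast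
qed

lemma r_Suc: "good a \<Longrightarrow> r a (Suc m) = a/(a+1) * r (a+1) m"
proof -
  assume g: "good a"
  have "a + 1 \<noteq> 0" using good_ne[OF g, of 0] by simp
  then show ?thesis unfolding r_def pochhammer_rec using poch_ne0[OF good_shift[OF g], of m]
    by (simp add: add.assoc field_simps)
qed

lemma r0[simp]: "r a 0 = 1" by (simp add: r_def)

lemma base: "good a \<Longrightarrow> (T 0 a) sums (2 powr a)"
proof -
  assume g: "good a"
  have "norm (-1/2::complex) < 1" by simp
  from gen_binomial_complex[OF this, of "-a"]
  have "(\<lambda>n. ((-a) gchoose n) * (-1/2)^n) sums (1/2) powr (-a)" by simp
  also have "(\<lambda>n. ((-a) gchoose n) * (-1/2)^n) = T 0 a"
  proof
    fix n
    have "((-a) gchoose n) * (-1/2)^n = (-1)^n * (-1)^n * pochhammer a n / fact n * (1/2)^n"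
      by (simp add: gbinomial_pochhammer power_minus' power_divide)
    also have "(-1::complex)^n * (-1)^n = 1" by (simp flip: power_add)
    finally show "((-a) gchoose n) * (-1/2)^n = T 0 a n"
      unfolding T_def r_def using poch_ne0[OF g, of n] by simp
  qed
  finally show ?thesis by (simp add: half_powr)
qed

lemma S_Suc: "good a \<Longrightarrow> S (Suc j) a = S j a + a/(a+1) * S j (a+1)"
proof -
  assume g: "good a"
  have "S (Suc j) a = 1 + (\<Sum>m\<le>j. of_nat (j choose Suc m) * r a (Suc m))
        + (\<Sum>m\<le>j. of_nat (j choose m) * r a (Suc m))"
    unfolding S_def sum.atMost_Suc_shift by (simp add: sum.distrib algebra_simps)
  moreover have "S j a = 1 + (\<Sum>m\<le>j. of_nat (j choose Suc m) * r a (Suc m))"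
  proof -
    have "S j a = (\<Sum>m\<le>Suc j. of_nat (j choose m) * r a m)" unfolding S_def by simp
    then show ?thesis unfolding sum.atMost_Suc_shift by simp
  qed
  moreover have "a/(a+1) * S j (a+1) = (\<Sum>m\<le>j. of_nat (j choose m) * r a (Suc m))"
    unfolding S_def sum_distrib_left r_Suc[OF g] by (simp add: algebra_simps)
  ultimately show ?thesis by simp
qed

lemma T_Suc: "good a \<Longrightarrow> T (Suc j) a m = T j a m + (if m = 0 then 0 else a/(a+1) * (1/2) * T j (a+1) (m-1))"
proof (cases m)
  case 0 then show ?thesis by (simp add: T_def)
next
  case (Suc n)
  assume g: "good a"
  have e: "a + of_nat (Suc j + 1) = (a + of_nat (j+1)) + 1" by simp
  have e2: "a + 1 + of_nat (j+1) = (a + of_nat (j+1)) + 1" by simp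
  have A: "of_nat (Suc n) * Q / fact (Suc n) = Q / fact n" for Q :: complex
    by (simp add: fact_Suc del: of_nat_Suc)
  define b where "b = a + of_nat (j+1)"
  have "T (Suc j) a m = r a (Suc n) * (pochhammer b (Suc n) + of_nat (Suc n) * pochhammer (b+1) n) / fact (Suc n) * (1/2)^Suc n"
    unfolding Suc T_def e b_def poch_step ..
  also have "\<dots> = T j a m + r a (Suc n) * (of_nat (Suc n) * pochhammer (b+1) n / fact (Suc n)) * (1/2)^Suc n"
    unfolding Suc T_def b_def by (simp add: distrib_left add_divide_distrib distrib_right)
  also have "\<dots> = T j a m + a/(a+1) * (1/2) * T j (a+1) n"
    unfolding A r_Suc[OF g] T_def b_def e2 by (simp add: algebra_simps)
  finally show ?thesis using Suc by simp
qed

lemma main: "good a \<Longrightarrow> (T j a) sums (2 powr a * S j a)"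
proof (induction j arbitrary: a)
  case 0 then show ?case using base by (simp add: S_def)
next
  case (Suc j)
  have g: "good a" by fact
  define c where "c = a/(a+1) * (1/2)"
  define h where "h m = (if m = 0 then 0 else c * T j (a+1) (m-1))" for m
  have "(\<lambda>n. c * T j (a+1) n) sums (c * (2 powr (a+1) * S j (a+1)))"
    by (intro sums_mult Suc.IH good_shift g)
  then have "(\<lambda>n. h (Suc n)) sums (c * (2 powr (a+1) * S j (a+1)))" by (simp add: h_def)
  then have "h sums (c * (2 powr (a+1) * S j (a+1)) + h 0)" by (simp only: sums_Suc_iff)
  then have "h sums (c * (2 powr (a+1) * S j (a+1)))" by (simp add: h_def)
  from sums_add[OF Suc.IH[OF g] this]
  have s1: "(\<lambda>m. T j a m + h m) sums (2 powr a * S j a + c * (2 powr (a+1) * S j (a+1)))" .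
  have f: "(\<lambda>m. T j a m + h m) = T (Suc j) a"
    using T_Suc[OF g] by (auto simp: h_def c_def)
  have v: "2 powr a * S j a + c * (2 powr (a+1) * S j (a+1)) = 2 powr a * S (Suc j) a"
  proof -
    have h2: "(1/2::complex) * (2 powr a * 2) = 2 powr a" by simp
    have p1: "(2::complex) powr 1 = 2" by (simp add: powr_def)
    have "c * 2 powr (a+1) = a/(a+1) * ((1/2) * (2 powr a * 2))"
      unfolding c_def powr_add p1 by (simp only: mult.assoc)
    also have "\<dots> = a/(a+1) * 2 powr a" using h2 by simp
    finally have "c * 2 powr (a+1) = a/(a+1) * 2 powr a" .
    then have "c * (2 powr (a+1) * S j (a+1)) = a/(a+1) * 2 powr a * S j (a+1)"
      by (simp only: mult.assoc[symmetric])
    then show ?thesis unfolding S_Suc[OF g] by (simp add: algebra_simps)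
  qed
  show ?case using s1 unfolding f v .
qed

lemma r_alt: "good a \<Longrightarrow> r a m = 1 - of_nat m / (a + of_nat m)"
proof (cases m)
  case 0 then show ?thesis by simp
next
  case (Suc n)
  assume g: "good a"
  have ne: "a + 1 + of_nat n \<noteq> 0" using good_ne[OF g] .
  have P: "pochhammer (a+1) n \<noteq> 0" using poch_ne0[OF g] .
  have "r a m = a * pochhammer (a+1) n / ((a + 1 + of_nat n) * pochhammer (a+1) n)"
    unfolding Suc r_def pochhammer_rec[of a] pochhammer_rec'[of "a+1"] ..
  also have "\<dots> = a / (a + 1 + of_nat n)" using P by simp
  also have "\<dots> = 1 - of_nat m / (a + of_nat m)" using ne unfolding Suc
    by (simp add: field_simps)
  finally show ?thesis .
qed

lemma S_alt: "good a \<Longrightarrow> S j a = 2^j - (\<Sum>i=1..j. fact j / (fact (i-1) * fact (j-i) * (a + of_nat i)))"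
proof -
  assume g: "good a"
  have "S j a = (\<Sum>m\<le>j. of_nat (j choose m)) - (\<Sum>m\<le>j. of_nat (j choose m) * (of_nat m / (a + of_nat m)))"
    unfolding S_def r_alt[OF g] by (simp add: algebra_simps sum_subtractf)
  also have "(\<Sum>m\<le>j. of_nat (j choose m)) = (2::complex)^j"
    by (metis choose_row_sum of_nat_numeral of_nat_power of_nat_sum)
  also have "(\<Sum>m\<le>j. of_nat (j choose m) * (of_nat m / (a + of_nat m))) =
     (\<Sum>m=0..j. of_nat (j choose m) * (of_nat m / (a + of_nat m)))"
    by (simp add: atMost_atLeast0)
  also have "\<dots> = (\<Sum>m=1..j. of_nat (j choose m) * (of_nat m / (a + of_nat m)))"
    by (subst sum.atLeast_Suc_atMost) auto
  also have "\<dots> = (\<Sum>i=1..j. fact j / (fact (i-1) * fact (j-i) * (a + of_nat i)))"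
  proof (rule sum.cong)
    fix i assume i: "i \<in> {1..j}"
    then have "i \<le> j" "i > 0" by auto
    then obtain p where p: "i = Suc p" by (cases i) auto
    have nei: "a + of_nat i \<noteq> 0" using good_ne[OF g, of p] unfolding p by (simp add: add.assoc)
    have "of_nat (j choose i) * (of_nat i / (a + of_nat i)) =
          fact j / (fact i * fact (j - i)) * (of_nat i / (a + of_nat i))"
      by (simp add: binomial_fact[OF \<open>i \<le> j\<close>, where 'a=complex])
    also have "fact i = of_nat i * (fact (i-1) :: complex)" using fact_reduce[OF \<open>i > 0\<close>] .
    also have "fact j / (of_nat i * fact (i-1) * fact (j - i)) * (of_nat i / (a + of_nat i)) =
          (fact j :: complex) / (fact (i-1) * fact (j-i) * (a + of_nat i))"
      using \<open>i > 0\<close> by (simp add: divide_inverse inverse_mult_distrib mult_ac)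
    finally show "of_nat (j choose i) * (of_nat i / (a + of_nat i)) =
          fact j / (fact (i-1) * fact (j-i) * (a + of_nat i))" .
  qed simp
  finally show ?thesis .
qed

lemma hyp_eq: "k \<ge> 1 \<Longrightarrow> hyp2F1 a (a + of_nat k) (a + 1) (1/2) = suminf (T (k-1) a)"
  unfolding hyp2F1_def T_def r_def
  by (intro arg_cong[where f=suminf] ext) (simp add: field_simps)

lemma F2: assumes g: "good a" shows "(of_nat (Suc (Suc n)) - 1) / (a + 1) * hyp2F1 (2 - of_nat (Suc (Suc n))) (a + 1) (a + 2) (-1)
   = (\<Sum>i=1..Suc (Suc n) - 1. fact (Suc (Suc n) - 1) / (fact (i - 1) * fact (Suc (Suc n) - i - 1) * (a + of_nat i)))"
proof -
  define f where "f m = pochhammer (- of_nat n) m * pochhammer (a+1) m / (fact m * pochhammer (a+2) m) * (-1::complex)^m" for m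
  have m2: "2 - of_nat (Suc (Suc n)) = (- of_nat n :: complex)" by simp
  have "f sums (\<Sum>m\<le>n. f m)"
    by (rule sums_finite) (auto simp: f_def pochhammer_of_nat_eq_0_lemma)
  then have H: "hyp2F1 (2 - of_nat (Suc (Suc n))) (a + 1) (a + 2) (-1) = (\<Sum>m\<le>n. f m)"
    unfolding hyp2F1_def m2 f_def by (simp add: sums_iff)
  have ne1: "a + 1 \<noteq> 0" using good_ne[OF g, of 0] by simp
  have fm: "f m = of_nat (n choose m) * ((a + 1) / (a + 1 + of_nat m))" for m
  proof -
    have c: "pochhammer (- of_nat n) m * (-1::complex)^m / fact m = of_nat (n choose m)"
      by (simp add: binomial_gbinomial gbinomial_pochhammer field_simps flip: power_add)
    have P: "pochhammer (a+2) m \<noteq> 0" using poch_ne0[OF good_shift[OF g], of m] by (simp add: add.assoc)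
    have ne: "a + 1 + of_nat m \<noteq> 0" using good_ne[OF g] .
    have q: "pochhammer (a+1) m * (a + 1 + of_nat m) = (a+1) * pochhammer (a+2) m"
    proof -
      have q0: "(a+1) * pochhammer (a+1+1) m = (a + 1 + of_nat m) * pochhammer (a+1) m"
        by (simp only: pochhammer_rec[symmetric] pochhammer_rec'[symmetric])
      have "a+1+1 = a+2" by simp
      then show ?thesis using q0 by (simp add: algebra_simps)
    qed
    have "pochhammer (a+1) m / pochhammer (a+2) m = (a + 1) / (a + 1 + of_nat m)"
      using P ne q by (simp add: field_simps)
    have "f m = (pochhammer (- of_nat n) m * (-1::complex)^m / fact m) * (pochhammer (a+1) m / pochhammer (a+2) m)"
      unfolding f_def by (simp add: divide_inverse inverse_mult_distrib mult_ac)
    then show ?thesis using c \<open>pochhammer (a+1) m / pochhammer (a+2) m = (a + 1) / (a + 1 + of_nat m)\<close> by simp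
  qed
  have "(of_nat (Suc (Suc n)) - 1) / (a + 1) * (\<Sum>m\<le>n. f m) =
       (\<Sum>m=0..n. fact (Suc n) / (fact m * fact (n - m) * (a + of_nat (Suc m))))"
    unfolding sum_distrib_left atMost_atLeast0
  proof (rule sum.cong)
    fix m assume "m \<in> {0..n}" then have mn: "m \<le> n" by simp
    have ne: "a + 1 + of_nat m \<noteq> 0" using good_ne[OF g] .
    show "(of_nat (Suc (Suc n)) - 1) / (a + 1) * f m = fact (Suc n) / (fact m * fact (n - m) * (a + of_nat (Suc m)))"
    proof -
      have e1: "(of_nat (Suc (Suc n)) - 1 :: complex) = of_nat (Suc n)" by simp
      have e3: "a + of_nat (Suc m) = a + 1 + of_nat m" by (simp add: algebra_simps)
      have "(of_nat (Suc (Suc n)) - 1) / (a + 1) * f m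
          = of_nat (Suc n) * (fact n / (fact m * fact (n - m))) / (a + 1 + of_nat m)"
        unfolding fm binomial_fact[OF mn, where 'a=complex] e1 using ne1
        by (simp add: divide_inverse inverse_mult_distrib mult_ac)
      also have "\<dots> = fact (Suc n) / (fact m * fact (n - m) * (a + of_nat (Suc m)))"
        unfolding fact_Suc e3 by (simp add: divide_inverse inverse_mult_distrib mult_ac)
      finally show ?thesis .
    qed
  qed simp
  also have "\<dots> = (\<Sum>i=Suc 0..Suc n. fact (Suc n) / (fact (i - 1) * fact (Suc n - i) * (a + of_nat i)))"
    unfolding sum.shift_bounds_cl_Suc_ivl by simp
  also have "\<dots> = (\<Sum>i=1..Suc (Suc n) - 1. fact (Suc (Suc n) - 1) / (fact (i - 1) * fact (Suc (Suc n) - i - 1) * (a + of_nat i)))"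
    by simp
  finally show ?thesis using H by simp
qed


theorem mainTheorem2:
  fixes k :: nat and a :: complex
  assumes "k \<ge> 1"
    and "\<And>n::nat. n \<ge> 1 \<Longrightarrow> a \<noteq> - of_nat n"
  shows "hyp2F1 a (a + of_nat k) (a + 1) (1/2) =
           2 powr a * (2 ^ (k - 1)
             - (of_nat k - 1) / (a + 1) * hyp2F1 (2 - of_nat k) (a + 1) (a + 2) (-1))
       \<and> hyp2F1 a (a + of_nat k) (a + 1) (1/2) =
           2 powr a * (2 ^ (k - 1)
             - (\<Sum>i=1..k-1. fact (k - 1) / (fact (i - 1) * fact (k - i - 1) * (a + of_nat i))))"
proof -
  have g: "good a" unfolding good_def using assms(2) by auto
  have E2: "hyp2F1 a (a + of_nat k) (a + 1) (1/2) =
           2 powr a * (2 ^ (k - 1)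
             - (\<Sum>i=1..k-1. fact (k - 1) / (fact (i - 1) * fact (k - i - 1) * (a + of_nat i))))"
  proof -
    have "hyp2F1 a (a + of_nat k) (a + 1) (1/2) = 2 powr a * S (k-1) a"
      unfolding hyp_eq[OF assms(1)] using main[OF g] by (rule sums_unique[symmetric])
    also have "S (k-1) a = 2 ^ (k - 1)
             - (\<Sum>i=1..k-1. fact (k - 1) / (fact (i - 1) * fact (k - i - 1) * (a + of_nat i)))"
      unfolding S_alt[OF g] by (simp add: diff_commute)
    finally show ?thesis .
  qed
  have E1: "(of_nat k - 1) / (a + 1) * hyp2F1 (2 - of_nat k) (a + 1) (a + 2) (-1) =
     (\<Sum>i=1..k-1. fact (k - 1) / (fact (i - 1) * fact (k - i - 1) * (a + of_nat i)))"
  proof (cases "k = 1")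
    case True then show ?thesis by simp
  next
    case False
    with assms(1) obtain n where "k = Suc (Suc n)" by (metis Suc_diff_Suc diff_Suc_1 le_neq_implies_less less_imp_Suc_add plus_1_eq_Suc)
    then show ?thesis using F2[OF g, of n] by simp
  qed
  show ?thesis using E1 E2 by simp
qed

end
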